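(* Let $\epsilon\in\{1,-1\}\subseteq\mathbb{F}_{p^m}$, $\phi(x)=x^2+\epsilon\gamma x+\frac{\gamma^2}{2}$, $\mathsf{R}_{\epsilon\gamma}=R[x]/\langle\phi(x)^{p^s}\rangle$. Let $1\le i\le p^s-1$, $0\le t<i$, and let $h(x)$ be either $0$ or a unit of $\mathsf{R}_{\epsilon\gamma}$ of the form $\sum_{j}(a_{j0}x+b_{j0})\phi(x)^j$ with $a_{j0},b_{j0}\in\mathbb{F}_{p^m}$, $a_{00}x+b_{00}\neq0$. Then the smallest integer $U$ with $u\,\phi(x)^U\in\langle \phi(x)^i+u\,\phi(x)^th(x)\rangle$ is $$U=\begin{cases} i & \text{if } h(x)=0,\\ \min\{i,\ p^s-i+t\} & \text{if } h(x) \text{ is a unit in } \mathsf{R}_{\epsilon\gamma}.\end{cases}$$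
   Context: Let $p$ be an odd prime and $m,s$ positive integers with $p^m\equiv 3\pmod 4$; $\mathbb{F}_{p^m}$ is the field with $p^m$ elements and $R=\mathbb{F}_{p^m}[u]/\langle u^2\rangle$. Fix $\alpha\in\mathbb{F}_{p^m}\setminus\{0\}$ that is not a square in $\mathbb{F}_{p^m}$, let $\alpha_0\in\mathbb{F}_{p^m}$ satisfy $\alpha_0^{p^s}=\alpha$, and let $\gamma\in\mathbb{F}_{p^m}$ satisfy $\gamma^4+4\alpha_0=0$. *)

theory Defs
  imports "HOL-Computational_Algebra.Polynomial"
begin

text \<open>Model of R[x] with R = F[u]/(u^2): an element f0 + u f1 (f0, f1 in F[x]) is the pair (f0, f1).
  Since u^2 = 0, (f0 + u f1)(g0 + u g1) = f0 g0 + u (f0 g1 + f1 g0).\<close>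

type_synonym 'a Rx = "'a poly \<times> 'a poly"

definition Rx_mult :: "'a::comm_ring_1 Rx \<Rightarrow> 'a Rx \<Rightarrow> 'a Rx" where
  "Rx_mult f g = (fst f * fst g, fst f * snd g + snd f * fst g)"

text \<open>Congruence modulo the ideal generated by M (M in F[x]) inside R[x]:
  f0 + u f1 \<in> \<langle>M\<rangle> iff M divides f0 and f1.\<close>

definition Rx_cong_mod :: "'a::comm_ring_1 poly \<Rightarrow> 'a Rx \<Rightarrow> 'a Rx \<Rightarrow> bool" where
  "Rx_cong_mod M f g \<longleftrightarrow> M dvd (fst f - fst g) \<and> M dvd (snd f - snd g)"

definition quot_ideal_mem :: "'a::comm_ring_1 poly \<Rightarrow> 'a Rx \<Rightarrow> 'a Rx \<Rightarrow> bool" where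
  "quot_ideal_mem M g f \<longleftrightarrow> (\<exists>r. Rx_cong_mod M (Rx_mult r g) f)"

definition quot_unit :: "'a::comm_ring_1 poly \<Rightarrow> 'a Rx \<Rightarrow> bool" where
  "quot_unit M f \<longleftrightarrow> (\<exists>r. Rx_cong_mod M (Rx_mult r f) (1, 0))"

end

theory Submission
  imports Defs
begin


lemma no_higher_dvd:
  fixes \<phi> :: "'a::field poly"
  assumes "degree \<phi> > 0"
  shows "\<not> (\<phi> ^ Suc U dvd \<phi> ^ U)"
proof
  assume h: "\<phi> ^ Suc U dvd \<phi> ^ U"
  have nz: "\<phi> \<noteq> 0" using assms by auto
  have "\<phi> ^ U * \<phi> dvd \<phi> ^ U * 1" using h by (simp add: mult.commute)
  then have "\<phi> dvd 1" using nz by (subst (asm) dvd_mult_cancel_left) auto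
  then have "degree \<phi> = 0" using is_unit_iff_degree nz by blast
  then show False using assms by simp
qed

lemma pow_dvd_le:
  fixes \<phi> :: "'a::field poly"
  shows "a \<le> b \<Longrightarrow> \<phi> ^ a dvd \<phi> ^ b"
  by (simp add: le_imp_power_dvd)

theorem proposition3p13:
  fixes p m s :: nat
    and \<alpha> \<alpha>0 \<gamma> \<epsilon> :: "'a::{field,finite}"
    and i t :: nat
    and h :: "'a poly"
    and a b :: "nat \<Rightarrow> 'a"
  assumes "prime p" and "odd p" and "m > 0" and "s > 0"
    and "card (UNIV :: 'a set) = p ^ m"
    and "p ^ m mod 4 = 3"
    and "\<alpha> \<noteq> 0" and "\<not> (\<exists>y. y ^ 2 = \<alpha>)"
    and "\<alpha>0 ^ (p ^ s) = \<alpha>"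
    and "\<gamma> ^ 4 + 4 * \<alpha>0 = 0"
    and "\<epsilon> = 1 \<or> \<epsilon> = -1"
    and "1 \<le> i" and "i \<le> p ^ s - 1" and "t < i"
    and hform: "h = 0 \<or>
       (quot_unit ([:\<gamma>\<^sup>2 / 2, \<epsilon> * \<gamma>, 1:] ^ (p ^ s)) (h, 0) \<and>
        h = (\<Sum>j<p ^ s. [:b j, a j:] * [:\<gamma>\<^sup>2 / 2, \<epsilon> * \<gamma>, 1:] ^ j) \<and>
        [:b 0, a 0:] \<noteq> 0)"
  shows "(let \<phi> = [:\<gamma>\<^sup>2 / 2, \<epsilon> * \<gamma>, 1:];
              P = (\<lambda>U. quot_ideal_mem (\<phi> ^ (p ^ s)) (\<phi> ^ i, \<phi> ^ t * h) (0, \<phi> ^ U));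
              V = (if h = 0 then i else min i (p ^ s - i + t))
          in P V \<and> (\<forall>U < V. \<not> P U))"
proof -
  define \<phi> where "\<phi> = [:\<gamma>\<^sup>2 / 2, \<epsilon> * \<gamma>, 1:]"
  define N where "N = p ^ s"
  have deg: "degree \<phi> > 0" unfolding \<phi>_def by simp
  have nz: "\<phi> \<noteq> 0" using deg by auto
  have iN: "i < N" using assms(12,13) unfolding N_def by linarith
  define P where "P = (\<lambda>U. quot_ideal_mem (\<phi> ^ N) (\<phi> ^ i, \<phi> ^ t * h) (0, \<phi> ^ U))"
  define V where "V = (if h = 0 then i else min i (N - i + t))"
  have Pi: "P i"
    unfolding P_def quot_ideal_mem_def Rx_cong_mod_def Rx_mult_def
    by (rule exI[of _ "(0,1)"]) simp
  have notP: "\<not> P U" if "U < i" "U < N - i + t \<or> h = 0" for U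
  proof
    assume "P U"
    then obtain r0 r1 where d1: "\<phi> ^ N dvd r0 * \<phi> ^ i"
      and d2: "\<phi> ^ N dvd r0 * (\<phi> ^ t * h) + r1 * \<phi> ^ i - \<phi> ^ U"
      unfolding P_def quot_ideal_mem_def Rx_cong_mod_def Rx_mult_def by auto
    have "\<phi> ^ (N - i) * \<phi> ^ i dvd r0 * \<phi> ^ i"
      using d1 iN by (simp add: power_add[symmetric])
    then have "\<phi> ^ (N - i) dvd r0" using nz by (simp add: dvd_mult_cancel_right)
    then obtain q where q: "r0 = \<phi> ^ (N - i) * q" by (auto simp: dvd_def)
    have e1: "r0 * (\<phi> ^ t * h) = \<phi> ^ (N - i + t) * (q * h)"
      by (simp add: q power_add algebra_simps)
    have a1: "\<phi> ^ Suc U dvd r0 * (\<phi> ^ t * h)"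
    proof (cases "h = 0")
      case True then show ?thesis by simp
    next
      case False then show ?thesis unfolding e1
      using pow_dvd_le[of "Suc U" "N - i + t" \<phi>] that by (simp add: dvd_mult2)
    qed
    have a2: "\<phi> ^ Suc U dvd r1 * \<phi> ^ i"
      using pow_dvd_le[of "Suc U" i \<phi>] that by (simp add: dvd_mult)
    have a3: "\<phi> ^ Suc U dvd \<phi> ^ N" using pow_dvd_le[of "Suc U" N \<phi>] that iN by simp
    have eqd: "A - (A - B) = B" for A B :: "'a poly" by simp
    have "\<phi> ^ Suc U dvd r0 * (\<phi> ^ t * h) + r1 * \<phi> ^ i - \<phi> ^ U"
      using dvd_trans[OF a3 d2] .
    then have "\<phi> ^ Suc U dvd (r0 * (\<phi> ^ t * h) + r1 * \<phi> ^ i) - (r0 * (\<phi> ^ t * h) + r1 * \<phi> ^ i - \<phi> ^ U)"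
      using a1 a2 \<open>\<phi> ^ Suc U dvd r0 * (\<phi> ^ t * h) + r1 * \<phi> ^ i - \<phi> ^ U\<close>
      by (metis dvd_add dvd_diff)
    then have "\<phi> ^ Suc U dvd \<phi> ^ U" by (metis (no_types) eqd)
    then show False using no_higher_dvd[OF deg] by blast
  qed
  have PV: "P V"
  proof (cases "h = 0 \<or> i \<le> N - i + t")
    case True then show ?thesis using Pi unfolding V_def by auto
  next
    case False
    then have hn: "h \<noteq> 0" and lt: "N - i + t < i" by auto
    then have "quot_unit (\<phi> ^ N) (h, 0)" using hform unfolding \<phi>_def N_def by auto
    then obtain r0 r1 where hi: "\<phi> ^ N dvd r0 * h - 1"
      unfolding quot_unit_def Rx_cong_mod_def Rx_mult_def by auto
    have V: "V = N - i + t" using hn lt unfolding V_def by auto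
    have "\<phi> ^ N dvd \<phi> ^ (N - i + t) * (r0 * h - 1)"
      using hi by (simp add: dvd_mult)
    moreover have "\<phi> ^ (N - i + t) * (r0 * h - 1) = (\<phi> ^ (N - i) * r0) * (\<phi> ^ t * h) - \<phi> ^ (N - i + t)"
      by (simp add: power_add algebra_simps)
    moreover have "(\<phi> ^ (N - i) * r0) * \<phi> ^ i = \<phi> ^ N * r0"
      using iN by (simp add: algebra_simps power_add[symmetric])
    have eqN: "\<phi> ^ (N - i) * \<phi> ^ i = \<phi> ^ N" using iN by (simp add: power_add[symmetric])
    have "\<phi> ^ N dvd (\<phi> ^ (N - i) * r0) * \<phi> ^ i"
      by (metis eqN dvd_triv_left mult.assoc mult.commute)
    ultimately show ?thesis unfolding P_def V quot_ideal_mem_def Rx_cong_mod_def Rx_mult_def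
      by (intro exI[of _ "(\<phi> ^ (N - i) * r0, 0)"]) simp
  qed
  have "\<forall>U<V. \<not> P U"
  proof (intro allI impI)
    fix U assume "U < V"
    then show "\<not> P U"
    proof (cases "h = 0")
      case True then show ?thesis using \<open>U < V\<close> notP[of U] iN unfolding V_def by auto
    next
      case False then show ?thesis using \<open>U < V\<close> notP[of U] unfolding V_def by auto
    qed
  qed
  then show ?thesis using PV unfolding Let_def P_def V_def \<phi>_def N_def by simp
qed

end
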